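(* Let $(H,R)$ be a semiquasitriangular Hopf algebra with Drinfeld element $u=S(R^{(2)})R^{(1)}$, let $\mu:H\otimes H\to H$ be the multiplication, $T=\mu\circ\nu:H\to H$, and $\widetilde\nu:=(S\otimes S)\circ\nu\circ S^{-1}:H\to H\otimes H$. The following are equivalent: (1) $S(u)u\in\operatorname{Z}(H)$; (2) $S\circ T=T\circ S$; (3) $\mu\circ\nu=\mu\circ\widetilde\nu$.
   Context: All vector spaces are over a field $k$, $\otimes=\otimes_k$. For a Hopf algebra $H$ with comultiplication $\Delta$, counit $\epsilon$, antipode $S$, we use Sweedler notation $\Delta(h)=h_1\otimes h_2$, etc. $\operatorname{Z}(H)$ is the centre of $H$. For $R\in H\otimes H$ we write $R=R^{(1)}\otimes R^{(2)}$ (summation understood); $R'^{(1)}\otimes R'^{(2)}$ denotes another copy of $R$. Definition (semiquasitriangular Hopf algebra): a pair $(H,R)$ with $H$ a Hopf algebra with bijective antipode and $R\in H\otimes H$ invertible such that (1) $R^{(1)}_1\otimes R^{(1)}_2\otimes R^{(2)} = R^{(1)}\otimes R'^{(1)}\otimes R^{(2)}R'^{(2)}$; (2) $R^{(1)}\otimes R^{(2)}_1\otimes R^{(2)}_2 = R^{(1)}R'^{(1)}\otimes R'^{(2)}\otimes R^{(2)}$; (3) $R^{(1)}\otimes R^{(2)}_2R'^{(1)}\otimes R^{(2)}_1R'^{(2)} = R^{(1)}\otimes R'^{(1)}R^{(2)}_1\otimes R'^{(2)}R^{(2)}_2$; (4) $R^{(1)}_2R'^{(1)}\otimes R^{(1)}_1R'^{(2)}\otimes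 R^{(2)} = R'^{(1)}R^{(1)}_1\otimes R'^{(2)}R^{(1)}_2\otimes R^{(2)}$; (5) $\nu(h):=R^{(2)}h_2R'^{(2)}\otimes S(h_1)S(R^{(1)})h_3R'^{(1)}\in H\otimes\operatorname{Z}(H)$ for all $h\in H$; (6) $\nu(h)=R^{(1)}h_2R'^{(1)}\otimes S(R'^{(2)})S(h_1)R^{(2)}h_3$ for all $h\in H$. The map $\nu$ in the claim is the one defined in (5); thus $T(h)=R^{(2)}h_2R'^{(2)}S(h_1)S(R^{(1)})h_3R'^{(1)}$. *)

theory Defs
  imports Main "HOL.Vector_Spaces"
begin

text \<open>
  The ground field is a type 'k of class field; the Hopf algebra H is a
  type 'h of class ring_1 (associative unital ring) together with a scalar
  multiplication sc :: 'k => 'h => 'h making it a k-vector space and a k-algebra.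

  An element of H (x) H is represented by a finite formal sum
  sum_i a_i (x) b_i, i.e. a list of pairs; similarly H (x) H (x) H by lists of triples.
  Two formal sums denote the same tensor iff every bilinear (resp. trilinear)
  functional into k takes the same value on them.  Since linear functionals on
  H (x) H are exactly bilinear forms on H x H, and functionals on a vector space
  separate points, this is precisely equality in the tensor product.
\<close>

definition bilin :: "('k::field \<Rightarrow> 'h::ab_group_add \<Rightarrow> 'h) \<Rightarrow> ('h \<Rightarrow> 'h \<Rightarrow> 'k) \<Rightarrow> bool" where
  "bilin sc f \<longleftrightarrow> (\<forall>y. Vector_Spaces.linear sc (*) (\<lambda>x. f x y)) \<and> (\<forall>x. Vector_Spaces.linear sc (*) (f x))"

definition trilin :: "('k::field \<Rightarrow> 'h::ab_group_add \<Rightarrow> 'h) \<Rightarrow> ('h \<Rightarrow> 'h \<Rightarrow> 'h \<Rightarrow> 'k) \<Rightarrow> bool" where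
  "trilin sc f \<longleftrightarrow> (\<forall>y z. Vector_Spaces.linear sc (*) (\<lambda>x. f x y z))
      \<and> (\<forall>x z. Vector_Spaces.linear sc (*) (\<lambda>y. f x y z))
      \<and> (\<forall>x y. Vector_Spaces.linear sc (*) (f x y))"

definition teq2 :: "('k::field \<Rightarrow> 'h::ab_group_add \<Rightarrow> 'h) \<Rightarrow> ('h \<times> 'h) list \<Rightarrow> ('h \<times> 'h) list \<Rightarrow> bool" where
  "teq2 sc xs ys \<longleftrightarrow> (\<forall>f. bilin sc f \<longrightarrow>
     sum_list (map (\<lambda>(a, b). f a b) xs) = sum_list (map (\<lambda>(a, b). f a b) ys))"

definition teq3 :: "('k::field \<Rightarrow> 'h::ab_group_add \<Rightarrow> 'h) \<Rightarrow> ('h \<times> 'h \<times> 'h) list \<Rightarrow> ('h \<times> 'h \<times> 'h) list \<Rightarrow> bool" where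
  "teq3 sc xs ys \<longleftrightarrow> (\<forall>f. trilin sc f \<longrightarrow>
     sum_list (map (\<lambda>(a, b, c). f a b c) xs) = sum_list (map (\<lambda>(a, b, c). f a b c) ys))"

definition tmult2 :: "('h::ring_1 \<times> 'h) list \<Rightarrow> ('h \<times> 'h) list \<Rightarrow> ('h \<times> 'h) list" where
  "tmult2 xs ys = [(a * c, b * d). (a, b) \<leftarrow> xs, (c, d) \<leftarrow> ys]"

definition center :: "'h::ring_1 set" where
  "center = {z. \<forall>x. z * x = x * z}"

definition in_H_ZH :: "('k::field \<Rightarrow> 'h::ring_1 \<Rightarrow> 'h) \<Rightarrow> ('h \<times> 'h) list \<Rightarrow> bool" where
  "in_H_ZH sc xs \<longleftrightarrow> (\<exists>ys. teq2 sc xs ys \<and> (\<forall>(a, z) \<in> set ys. z \<in> center))"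

definition k_algebra :: "('k::field \<Rightarrow> 'h::ring_1 \<Rightarrow> 'h) \<Rightarrow> bool" where
  "k_algebra sc \<longleftrightarrow> vector_space sc \<and>
     (\<forall>c x y. sc c (x * y) = sc c x * y \<and> sc c (x * y) = x * sc c y)"

definition Delta2 :: "('h \<Rightarrow> ('h \<times> 'h) list) \<Rightarrow> 'h \<Rightarrow> ('h \<times> 'h \<times> 'h) list" where
  "Delta2 \<Delta> h = [(h1, h2, h3). (x, h3) \<leftarrow> \<Delta> h, (h1, h2) \<leftarrow> \<Delta> x]"

definition hopf_algebra ::
  "('k::field \<Rightarrow> 'h::ring_1 \<Rightarrow> 'h) \<Rightarrow> ('h \<Rightarrow> ('h \<times> 'h) list) \<Rightarrow> ('h \<Rightarrow> 'k) \<Rightarrow> ('h \<Rightarrow> 'h) \<Rightarrow> bool" where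
  "hopf_algebra sc \<Delta> \<epsilon> S \<longleftrightarrow>
     k_algebra sc \<and>
     \<comment> \<open>\<Delta> is a linear map H \<rightarrow> H (x) H\<close>
     (\<forall>x y. teq2 sc (\<Delta> (x + y)) (\<Delta> x @ \<Delta> y)) \<and>
     (\<forall>c x. teq2 sc (\<Delta> (sc c x)) (map (\<lambda>(a, b). (sc c a, b)) (\<Delta> x))) \<and>
     \<comment> \<open>coassociativity\<close>
     (\<forall>h. teq3 sc [(h1, h2, b). (a, b) \<leftarrow> \<Delta> h, (h1, h2) \<leftarrow> \<Delta> a]
                   [(a, b1, b2). (a, b) \<leftarrow> \<Delta> h, (b1, b2) \<leftarrow> \<Delta> b]) \<and>
     \<comment> \<open>counit\<close>
     Vector_Spaces.linear sc (*) \<epsilon> \<and>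
     (\<forall>h. sum_list (map (\<lambda>(a, b). sc (\<epsilon> a) b) (\<Delta> h)) = h) \<and>
     (\<forall>h. sum_list (map (\<lambda>(a, b). sc (\<epsilon> b) a) (\<Delta> h)) = h) \<and>
     \<comment> \<open>\<Delta> and \<epsilon> are algebra maps\<close>
     (\<forall>x y. teq2 sc (\<Delta> (x * y)) (tmult2 (\<Delta> x) (\<Delta> y))) \<and>
     teq2 sc (\<Delta> 1) [(1, 1)] \<and>
     (\<forall>x y. \<epsilon> (x * y) = \<epsilon> x * \<epsilon> y) \<and> \<epsilon> 1 = 1 \<and>
     \<comment> \<open>antipode, assumed bijective\<close>
     Vector_Spaces.linear sc sc S \<and>
     (\<forall>h. sum_list (map (\<lambda>(a, b). S a * b) (\<Delta> h)) = sc (\<epsilon> h) 1) \<and>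
     (\<forall>h. sum_list (map (\<lambda>(a, b). a * S b) (\<Delta> h)) = sc (\<epsilon> h) 1) \<and>
     bij S"

definition nu :: "('h \<Rightarrow> ('h \<times> 'h) list) \<Rightarrow> ('h::ring_1 \<Rightarrow> 'h) \<Rightarrow> ('h \<times> 'h) list \<Rightarrow> 'h \<Rightarrow> ('h \<times> 'h) list" where
  "nu \<Delta> S R h = [(b * h2 * d, S h1 * S a * h3 * c). (a, b) \<leftarrow> R, (h1, h2, h3) \<leftarrow> Delta2 \<Delta> h, (c, d) \<leftarrow> R]"

definition mu :: "('h::ring_1 \<times> 'h) list \<Rightarrow> 'h" where
  "mu xs = sum_list (map (\<lambda>(a, b). a * b) xs)"

definition SS :: "('h \<Rightarrow> 'h) \<Rightarrow> ('h \<times> 'h) list \<Rightarrow> ('h \<times> 'h) list" where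
  "SS S xs = map (\<lambda>(a, b). (S a, S b)) xs"

definition semiquasitriangular ::
  "('k::field \<Rightarrow> 'h::ring_1 \<Rightarrow> 'h) \<Rightarrow> ('h \<Rightarrow> ('h \<times> 'h) list) \<Rightarrow> ('h \<Rightarrow> 'k) \<Rightarrow> ('h \<Rightarrow> 'h)
     \<Rightarrow> ('h \<times> 'h) list \<Rightarrow> bool" where
  "semiquasitriangular sc \<Delta> \<epsilon> S R \<longleftrightarrow>
     hopf_algebra sc \<Delta> \<epsilon> S \<and>
     \<comment> \<open>R invertible in H (x) H\<close>
     (\<exists>R'. teq2 sc (tmult2 R R') [(1, 1)] \<and> teq2 sc (tmult2 R' R) [(1, 1)]) \<and>
     \<comment> \<open>(1)\<close>
     teq3 sc [(a1, a2, b). (a, b) \<leftarrow> R, (a1, a2) \<leftarrow> \<Delta> a]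
             [(a, c, b * d). (a, b) \<leftarrow> R, (c, d) \<leftarrow> R] \<and>
     \<comment> \<open>(2)\<close>
     teq3 sc [(a, b1, b2). (a, b) \<leftarrow> R, (b1, b2) \<leftarrow> \<Delta> b]
             [(a * c, d, b). (a, b) \<leftarrow> R, (c, d) \<leftarrow> R] \<and>
     \<comment> \<open>(3)\<close>
     teq3 sc [(a, b2 * c, b1 * d). (a, b) \<leftarrow> R, (b1, b2) \<leftarrow> \<Delta> b, (c, d) \<leftarrow> R]
             [(a, c * b1, d * b2). (a, b) \<leftarrow> R, (b1, b2) \<leftarrow> \<Delta> b, (c, d) \<leftarrow> R] \<and>
     \<comment> \<open>(4)\<close>
     teq3 sc [(a2 * c, a1 * d, b). (a, b) \<leftarrow> R, (a1, a2) \<leftarrow> \<Delta> a, (c, d) \<leftarrow> R]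
             [(c * a1, d * a2, b). (a, b) \<leftarrow> R, (a1, a2) \<leftarrow> \<Delta> a, (c, d) \<leftarrow> R] \<and>
     \<comment> \<open>(5)\<close>
     (\<forall>h. in_H_ZH sc (nu \<Delta> S R h)) \<and>
     \<comment> \<open>(6)\<close>
     (\<forall>h. teq2 sc (nu \<Delta> S R h)
        [(a * h2 * c, S d * S h1 * b * h3). (a, b) \<leftarrow> R, (h1, h2, h3) \<leftarrow> Delta2 \<Delta> h, (c, d) \<leftarrow> R])"

definition drinfeld_u :: "('h::ring_1 \<Rightarrow> 'h) \<Rightarrow> ('h \<times> 'h) list \<Rightarrow> 'h" where
  "drinfeld_u S R = sum_list (map (\<lambda>(a, b). S b * a) R)"

end

theory Submission imports Defs begin

lemma sep_points:
  fixes sc :: "'k::field \<Rightarrow> 'h::ab_group_add \<Rightarrow> 'h"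
  assumes vs: "vector_space sc"
    and h: "\<And>\<phi>. Vector_Spaces.linear sc (*) \<phi> \<Longrightarrow> \<phi> x = \<phi> y"
  shows "x = y"
proof (rule ccontr)
  assume ne: "x \<noteq> y"
  interpret vp: vector_space_pair sc "(*) :: 'k \<Rightarrow> 'k \<Rightarrow> 'k"
    by (unfold_locales) (auto simp: vs vector_space.vector_space_assms algebra_simps)
  have ind: "vp.vs1.independent {x - y}"
    using ne by simp
  let ?\<phi> = "vp.construct {x - y} (\<lambda>_. 1)"
  have lin: "Vector_Spaces.linear sc (*) ?\<phi>" by (rule vp.linear_construct[OF ind])
  have "?\<phi> (x - y) = 1" by (rule vp.construct_basis[OF ind]) simp
  moreover have "?\<phi> (x - y) = ?\<phi> x - ?\<phi> y"
    using lin by (simp add: module_hom.diff linear_iff_module_hom)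
  ultimately show False using h[OF lin] by simp
qed

lemma sum_list_concat': "sum_list (concat xss) = sum_list (map sum_list xss)"
  by (induct xss) auto

lemma sum_list_swap: "(\<Sum>x\<leftarrow>xs. \<Sum>y\<leftarrow>ys. f x y) = (\<Sum>y\<leftarrow>ys. \<Sum>x\<leftarrow>xs. (f x y :: 'a::comm_monoid_add))"
  by (induct xs) (auto simp: sum_list_addf)

lemma sum_list_multl: "c * (\<Sum>x\<leftarrow>xs. f x) = (\<Sum>x\<leftarrow>xs. c * (f x :: 'a::semiring_0))"
  by (induct xs) (auto simp: algebra_simps)
lemma sum_list_multr: "(\<Sum>x\<leftarrow>xs. f x) * c = (\<Sum>x\<leftarrow>xs. (f x :: 'a::semiring_0) * c)"
  by (induct xs) (auto simp: algebra_simps)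

lemma linear_sum_list:
  assumes "Vector_Spaces.linear s1 s2 f"
  shows "f (\<Sum>x\<leftarrow>xs. g x) = (\<Sum>x\<leftarrow>xs. f (g x))"
proof -
  from assms have a: "\<And>x y. f (x + y) = f x + f y"
    by (auto simp: linear_iff)
  have "f 0 = f 0 + f 0" using a[of 0 0] by simp
  then have z: "f 0 = 0" by simp
  show ?thesis by (induct xs) (auto simp: a z)
qed

locale sqt =
  fixes sc :: "'k::field \<Rightarrow> 'h::ring_1 \<Rightarrow> 'h"
    and \<Delta> :: "'h \<Rightarrow> ('h \<times> 'h) list"
    and \<epsilon> :: "'h \<Rightarrow> 'k"
    and S :: "'h \<Rightarrow> 'h"
    and R :: "('h \<times> 'h) list"
  assumes sqt: "semiquasitriangular sc \<Delta> \<epsilon> S R"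
begin

abbreviation lin :: "('h \<Rightarrow> 'h) \<Rightarrow> bool" where "lin f \<equiv> Vector_Spaces.linear sc sc f"

lemma hopf: "hopf_algebra sc \<Delta> \<epsilon> S" using sqt by (simp add: semiquasitriangular_def)

lemma vs: "vector_space sc" using hopf by (simp add: hopf_algebra_def k_algebra_def)
lemma vsk: "vector_space ((*) :: 'k \<Rightarrow> 'k \<Rightarrow> 'k)"
  by (unfold_locales) (auto simp: algebra_simps)

lemma smult_both: "\<forall>c x y. sc c (x * y) = sc c x * y \<and> sc c (x * y) = x * sc c y"
  using hopf unfolding hopf_algebra_def k_algebra_def by blast
lemma smult_left: "sc c x * y = sc c (x * y)" and smult_right: "x * sc c y = sc c (x * y)"
  using smult_both by metis+

lemma sc_add: "sc a (x + y) = sc a x + sc a y" and sc_add2: "sc (a + b) x = sc a x + sc b x"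
  and sc_sc: "sc a (sc b x) = sc (a * b) x" and sc_one: "sc 1 x = x"
  using vs by (auto simp: vector_space_def)

lemma sc_zero: "sc 0 x = 0" and sc_zero2: "sc a 0 = 0"
  using module.scale_zero_left[OF vs[unfolded module_iff_vector_space[symmetric]]]
    module.scale_zero_right[OF vs[unfolded module_iff_vector_space[symmetric]]] by auto

lemma lin_id: "lin (\<lambda>x. x)" using vs by (simp add: linear_iff)
lemma lin_mult_left: "lin f \<Longrightarrow> lin (\<lambda>x. a * f x)"
  using vs by (simp add: linear_iff algebra_simps smult_right)
lemma lin_mult_right: "lin f \<Longrightarrow> lin (\<lambda>x. f x * a)"
  using vs by (simp add: linear_iff algebra_simps smult_left)
lemma lin_add: "lin f \<Longrightarrow> lin g \<Longrightarrow> lin (\<lambda>x. f x + g x)"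
  using vs by (simp add: linear_iff algebra_simps sc_add)
lemma lin_scale: "lin f \<Longrightarrow> lin (\<lambda>x. sc c (f x))"
  using vs by (simp add: linear_iff algebra_simps sc_add sc_sc mult.commute)
lemma lin_comp: "lin f \<Longrightarrow> lin g \<Longrightarrow> lin (\<lambda>x. f (g x))"
  using Vector_Spaces.linear_compose[of sc sc g sc f] by (simp add: comp_def)
lemma lin_sum: "(\<And>p. lin (\<lambda>x. F p x)) \<Longrightarrow> lin (\<lambda>x. \<Sum>p\<leftarrow>xs. F p x)"
proof (induct xs)
  case Nil then show ?case using vs by (simp add: linear_iff sc_zero2)
next
  case (Cons a xs) then show ?case by (simp add: lin_add)
qed

lemma linS: "lin S" using hopf by (simp add: hopf_algebra_def)
lemma lin_S: "lin f \<Longrightarrow> lin (\<lambda>x. S (f x))" using lin_comp[OF linS] .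
lemma lineps: "Vector_Spaces.linear sc (*) \<epsilon>" using hopf by (simp add: hopf_algebra_def)
lemma eps_add: "\<epsilon> (x + y) = \<epsilon> x + \<epsilon> y" and eps_sc: "\<epsilon> (sc c x) = c * \<epsilon> x"
  using lineps by (auto simp: linear_iff)
lemma lin_sc_eps: "lin f \<Longrightarrow> lin (\<lambda>x. sc (\<epsilon> (f x)) c)"
  using vs lineps by (simp add: linear_iff eps_add eps_sc sc_add2 sc_sc)

lemma S_add: "S (x + y) = S x + S y" and S_sc: "S (sc c x) = sc c (S x)"
  using linS by (auto simp: linear_iff)
lemma S_zero: "S 0 = 0" using S_sc[of 0 0] by (simp add: sc_zero)
lemma S_sum: "S (\<Sum>x\<leftarrow>xs. f x) = (\<Sum>x\<leftarrow>xs. S (f x))"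
  by (rule linear_sum_list[OF linS])
lemma eps_sum: "\<epsilon> (\<Sum>x\<leftarrow>xs. f x) = (\<Sum>x\<leftarrow>xs. \<epsilon> (f x))"
  by (rule linear_sum_list[OF lineps])
lemma sc_sum: "sc c (\<Sum>x\<leftarrow>xs. f x) = (\<Sum>x\<leftarrow>xs. sc c (f x))"
  by (induct xs) (auto simp: sc_add sc_zero2)
lemma sc_sum2: "sc (\<Sum>x\<leftarrow>xs. f x) y = (\<Sum>x\<leftarrow>xs. sc (f x) y)"
  by (induct xs) (auto simp: sc_add2 sc_zero)
lemma lin_sumD: "lin f \<Longrightarrow> f (\<Sum>x\<leftarrow>xs. g x) = (\<Sum>x\<leftarrow>xs. f (g x))"
  by (rule linear_sum_list)
lemma lin_scD: "lin f \<Longrightarrow> f (sc c x) = sc c (f x)" and lin_addD: "lin f \<Longrightarrow> f (x + y) = f x + f y"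
  by (auto simp: linear_iff)

lemmas lin_intros = lin_id lin_mult_left lin_mult_right lin_add lin_scale lin_sum lin_S lin_sc_eps

definition bilinH :: "('h \<Rightarrow> 'h \<Rightarrow> 'h) \<Rightarrow> bool" where
  "bilinH g \<longleftrightarrow> (\<forall>y. lin (\<lambda>x. g x y)) \<and> (\<forall>x. lin (\<lambda>y. g x y))"
definition trilinH :: "('h \<Rightarrow> 'h \<Rightarrow> 'h \<Rightarrow> 'h) \<Rightarrow> bool" where
  "trilinH g \<longleftrightarrow> (\<forall>y z. lin (\<lambda>x. g x y z)) \<and> (\<forall>x z. lin (\<lambda>y. g x y z)) \<and> (\<forall>x y. lin (\<lambda>z. g x y z))"

lemma L2:
  assumes t: "teq2 sc xs ys" and g: "bilinH g"
  shows "(\<Sum>p\<leftarrow>xs. g (fst p) (snd p)) = (\<Sum>p\<leftarrow>ys. g (fst p) (snd p))"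
proof (rule sep_points[OF vs])
  fix \<phi> assume \<phi>: "Vector_Spaces.linear sc (*) \<phi>"
  have b: "bilin sc (\<lambda>a b. \<phi> (g a b))"
    using g \<phi> unfolding bilinH_def bilin_def
    by (auto intro: Vector_Spaces.linear_compose[of sc sc _ "(*)" \<phi>, unfolded comp_def])
  have "\<phi> (\<Sum>p\<leftarrow>xs. g (fst p) (snd p)) = (\<Sum>p\<leftarrow>xs. \<phi> (g (fst p) (snd p)))"
    by (rule linear_sum_list[OF \<phi>])
  also have "\<dots> = (\<Sum>p\<leftarrow>ys. \<phi> (g (fst p) (snd p)))"
    using t b unfolding teq2_def case_prod_beta' by blast
  also have "\<dots> = \<phi> (\<Sum>p\<leftarrow>ys. g (fst p) (snd p))"
    by (rule linear_sum_list[OF \<phi>, symmetric])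
  finally show "\<phi> (\<Sum>p\<leftarrow>xs. g (fst p) (snd p)) = \<phi> (\<Sum>p\<leftarrow>ys. g (fst p) (snd p))" .
qed

lemma L3:
  assumes t: "teq3 sc xs ys" and g: "trilinH g"
  shows "(\<Sum>p\<leftarrow>xs. g (fst p) (fst (snd p)) (snd (snd p))) = (\<Sum>p\<leftarrow>ys. g (fst p) (fst (snd p)) (snd (snd p)))"
proof (rule sep_points[OF vs])
  fix \<phi> assume \<phi>: "Vector_Spaces.linear sc (*) \<phi>"
  have b: "trilin sc (\<lambda>a b c. \<phi> (g a b c))"
    using g \<phi> unfolding trilinH_def trilin_def
    by (auto intro: Vector_Spaces.linear_compose[of sc sc _ "(*)" \<phi>, unfolded comp_def])
  have "\<phi> (\<Sum>p\<leftarrow>xs. g (fst p) (fst (snd p)) (snd (snd p))) = (\<Sum>p\<leftarrow>xs. \<phi> (g (fst p) (fst (snd p)) (snd (snd p))))"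
    by (rule linear_sum_list[OF \<phi>])
  also have "\<dots> = (\<Sum>p\<leftarrow>ys. \<phi> (g (fst p) (fst (snd p)) (snd (snd p))))"
    using t b unfolding teq3_def case_prod_beta' by blast
  also have "\<dots> = \<phi> (\<Sum>p\<leftarrow>ys. g (fst p) (fst (snd p)) (snd (snd p)))"
    by (rule linear_sum_list[OF \<phi>, symmetric])
  finally show "\<phi> (\<Sum>p\<leftarrow>xs. g (fst p) (fst (snd p)) (snd (snd p))) = \<phi> (\<Sum>p\<leftarrow>ys. g (fst p) (fst (snd p)) (snd (snd p)))" .
qed


lemma hopf_unf: "hopf_algebra sc \<Delta> \<epsilon> S \<longleftrightarrow> k_algebra sc \<and>
     (\<forall>x y. teq2 sc (\<Delta> (x + y)) (\<Delta> x @ \<Delta> y)) \<and>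
     (\<forall>c x. teq2 sc (\<Delta> (sc c x)) (map (\<lambda>(a, b). (sc c a, b)) (\<Delta> x))) \<and>
     (\<forall>h. teq3 sc [(h1, h2, b). (a, b) \<leftarrow> \<Delta> h, (h1, h2) \<leftarrow> \<Delta> a]
                   [(a, b1, b2). (a, b) \<leftarrow> \<Delta> h, (b1, b2) \<leftarrow> \<Delta> b]) \<and>
     Vector_Spaces.linear sc (*) \<epsilon> \<and>
     (\<forall>h. sum_list (map (\<lambda>(a, b). sc (\<epsilon> a) b) (\<Delta> h)) = h) \<and>
     (\<forall>h. sum_list (map (\<lambda>(a, b). sc (\<epsilon> b) a) (\<Delta> h)) = h) \<and>
     (\<forall>x y. teq2 sc (\<Delta> (x * y)) (tmult2 (\<Delta> x) (\<Delta> y))) \<and>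
     teq2 sc (\<Delta> 1) [(1, 1)] \<and>
     (\<forall>x y. \<epsilon> (x * y) = \<epsilon> x * \<epsilon> y) \<and> \<epsilon> 1 = 1 \<and>
     Vector_Spaces.linear sc sc S \<and>
     (\<forall>h. sum_list (map (\<lambda>(a, b). S a * b) (\<Delta> h)) = sc (\<epsilon> h) 1) \<and>
     (\<forall>h. sum_list (map (\<lambda>(a, b). a * S b) (\<Delta> h)) = sc (\<epsilon> h) 1) \<and>
     bij S" by (rule hopf_algebra_def)

lemma cu_l: "(\<Sum>p\<leftarrow>\<Delta> h. sc (\<epsilon> (fst p)) (snd p)) = h"
  using hopf unfolding hopf_unf case_prod_beta by blast
lemma cu_r: "(\<Sum>p\<leftarrow>\<Delta> h. sc (\<epsilon> (snd p)) (fst p)) = h"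
  using hopf unfolding hopf_unf case_prod_beta by blast
lemma ant_l: "(\<Sum>p\<leftarrow>\<Delta> h. S (fst p) * snd p) = sc (\<epsilon> h) 1"
  using hopf unfolding hopf_unf case_prod_beta by blast
lemma ant_r: "(\<Sum>p\<leftarrow>\<Delta> h. fst p * S (snd p)) = sc (\<epsilon> h) 1"
  using hopf unfolding hopf_unf case_prod_beta by blast
lemma eps_mult: "\<epsilon> (x * y) = \<epsilon> x * \<epsilon> y" and eps_one: "\<epsilon> 1 = 1" and bijS: "bij S"
  using hopf unfolding hopf_unf by blast+
lemma D_add: "teq2 sc (\<Delta> (x + y)) (\<Delta> x @ \<Delta> y)"
  and D_sc: "teq2 sc (\<Delta> (sc c x)) (map (\<lambda>(a, b). (sc c a, b)) (\<Delta> x))"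
  and D_mult: "teq2 sc (\<Delta> (x * y)) (tmult2 (\<Delta> x) (\<Delta> y))"
  and D_one: "teq2 sc (\<Delta> 1) [(1, 1)]"
  and D_coass: "teq3 sc [(h1, h2, b). (a, b) \<leftarrow> \<Delta> h, (h1, h2) \<leftarrow> \<Delta> a]
                   [(a, b1, b2). (a, b) \<leftarrow> \<Delta> h, (b1, b2) \<leftarrow> \<Delta> b]"
  using hopf unfolding hopf_unf by blast+

lemma lin_D: "(\<And>b. lin (\<lambda>a. F (a, b))) \<Longrightarrow> (\<And>a. lin (\<lambda>b. F (a, b))) \<Longrightarrow> lin (\<lambda>x. \<Sum>p\<leftarrow>\<Delta> x. F p)"
proof -
  assume l1: "\<And>b. lin (\<lambda>a. F (a, b))" and l2: "\<And>a. lin (\<lambda>b. F (a, b))"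
  have bl: "bilinH (\<lambda>a b. F (a, b))" using l1 l2 by (simp add: bilinH_def)
  have add: "(\<Sum>p\<leftarrow>\<Delta> (x + y). F p) = (\<Sum>p\<leftarrow>\<Delta> x. F p) + (\<Sum>p\<leftarrow>\<Delta> y. F p)" for x y
    using L2[OF D_add bl] by simp
  have scl: "(\<Sum>p\<leftarrow>\<Delta> (sc c x). F p) = sc c (\<Sum>p\<leftarrow>\<Delta> x. F p)" for c x
  proof -
    have e: "F (sc c (fst p), snd p) = sc c (F p)" for p
      using lin_scD[OF l1[of "snd p"], of c "fst p"] by simp
    show ?thesis using L2[OF D_sc bl] by (simp add: case_prod_beta' comp_def e sc_sum)
  qed
  show ?thesis using vs add scl by (simp add: linear_iff)
qed

lemmas lin_intros2 = lin_intros lin_D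

lemma coass:
  assumes "trilinH G"
  shows "(\<Sum>p\<leftarrow>\<Delta> h. \<Sum>q\<leftarrow>\<Delta> (fst p). G (fst q) (snd q) (snd p)) = (\<Sum>p\<leftarrow>\<Delta> h. \<Sum>q\<leftarrow>\<Delta> (snd p). G (fst p) (fst q) (snd q))"
  using L3[OF D_coass assms] by (simp add: map_concat sum_list_concat' comp_def split_def)

lemma Dmult:
  assumes "bilinH g"
  shows "(\<Sum>p\<leftarrow>\<Delta> (x * y). g (fst p) (snd p)) = (\<Sum>p\<leftarrow>\<Delta> x. \<Sum>q\<leftarrow>\<Delta> y. g (fst p * fst q) (snd p * snd q))"
  using L2[OF D_mult assms] by (simp add: tmult2_def map_concat sum_list_concat' comp_def split_def)

lemma Done:
  assumes "bilinH g"
  shows "(\<Sum>p\<leftarrow>\<Delta> 1. g (fst p) (snd p)) = g 1 1"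
  using L2[OF D_one assms] by simp

lemma S_one: "S 1 = 1"
proof -
  have "(\<Sum>p\<leftarrow>\<Delta> 1. S (fst p) * snd p) = S 1 * 1"
    by (rule Done) (simp add: bilinH_def; intro allI conjI lin_intros)
  then show ?thesis using ant_l[of 1] by (simp add: eps_one sc_one)
qed


lemmas alg = sum_list_multl sum_list_multr smult_left smult_right sc_sc S_sum S_sc sc_sum mult.assoc

lemma claim1: "(\<Sum>p\<leftarrow>\<Delta> x. \<Sum>q\<leftarrow>\<Delta> y. S (fst p * fst q) * (snd p * snd q)) = sc (\<epsilon> x * \<epsilon> y) 1"
proof -
  have "(\<Sum>p\<leftarrow>\<Delta> (x * y). S (fst p) * snd p) = (\<Sum>p\<leftarrow>\<Delta> x. \<Sum>q\<leftarrow>\<Delta> y. S (fst p * fst q) * (snd p * snd q))"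
    by (rule Dmult) (simp add: bilinH_def; intro allI conjI lin_intros)
  then show ?thesis using ant_l[of "x * y"] by (simp add: eps_mult)
qed

lemma claim2: "(\<Sum>p\<leftarrow>\<Delta> x. \<Sum>q\<leftarrow>\<Delta> y. (fst p * fst q) * (S (snd q) * S (snd p))) = sc (\<epsilon> x * \<epsilon> y) 1"
proof -
  have "(\<Sum>p\<leftarrow>\<Delta> x. \<Sum>q\<leftarrow>\<Delta> y. (fst p * fst q) * (S (snd q) * S (snd p)))
      = (\<Sum>p\<leftarrow>\<Delta> x. fst p * (\<Sum>q\<leftarrow>\<Delta> y. fst q * S (snd q)) * S (snd p))"
    by (simp add: sum_list_multl sum_list_multr mult.assoc)
  also have "\<dots> = (\<Sum>p\<leftarrow>\<Delta> x. sc (\<epsilon> y) (fst p * S (snd p)))"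
    by (simp add: ant_r smult_left smult_right)
  also have "\<dots> = sc (\<epsilon> y) (sc (\<epsilon> x) 1)" by (simp add: ant_r sc_sum[symmetric])
  finally show ?thesis by (simp add: sc_sc mult.commute)
qed


lemma S_anti: "S (x * y) = S y * S x"
proof -
  let ?Gy = "\<lambda>a b c d e f. S (a * d) * (b * e) * (S f * S c)"
  let ?Gx = "\<lambda>a b c. \<Sum>q\<leftarrow>\<Delta> y. \<Sum>q'\<leftarrow>\<Delta> (fst q). ?Gy a b c (fst q') (snd q') (snd q)"
  have tGx: "trilinH ?Gx"
    unfolding trilinH_def by (intro allI conjI; (intro lin_intros2 | simp only: prod.sel)+)
  have tGy: "trilinH (?Gy a b c)" for a b c
    unfolding trilinH_def by (intro allI conjI; (intro lin_intros2 | simp only: prod.sel)+)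
  have "S y * S x = S (\<Sum>q\<leftarrow>\<Delta> y. sc (\<epsilon> (fst q)) (snd q)) * S (\<Sum>p\<leftarrow>\<Delta> x. sc (\<epsilon> (fst p)) (snd p))"
    by (simp add: cu_l)
  also have "\<dots> = (\<Sum>p\<leftarrow>\<Delta> x. \<Sum>q\<leftarrow>\<Delta> y. (sc (\<epsilon> (fst p) * \<epsilon> (fst q)) 1) * (S (snd q) * S (snd p)))"
    by (simp add: alg sum_list_swap[where ys="\<Delta> y"] mult.commute)
  also have "\<dots> = (\<Sum>p\<leftarrow>\<Delta> x. \<Sum>q\<leftarrow>\<Delta> y. (\<Sum>p'\<leftarrow>\<Delta> (fst p). \<Sum>q'\<leftarrow>\<Delta> (fst q). S (fst p' * fst q') * (snd p' * snd q')) * (S (snd q) * S (snd p)))"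
    by (simp only: claim1)
  also have "\<dots> = (\<Sum>p\<leftarrow>\<Delta> x. \<Sum>p'\<leftarrow>\<Delta> (fst p). ?Gx (fst p') (snd p') (snd p))"
    by (simp add: sum_list_multr sum_list_swap[where ys="\<Delta> y"])
  also have "\<dots> = (\<Sum>p\<leftarrow>\<Delta> x. \<Sum>p'\<leftarrow>\<Delta> (snd p). ?Gx (fst p) (fst p') (snd p'))"
    by (rule coass[OF tGx])
  also have "\<dots> = (\<Sum>p\<leftarrow>\<Delta> x. \<Sum>p'\<leftarrow>\<Delta> (snd p). \<Sum>q\<leftarrow>\<Delta> y. \<Sum>q'\<leftarrow>\<Delta> (snd q). ?Gy (fst p) (fst p') (snd p') (fst q) (fst q') (snd q'))"
    by (simp only: coass[OF tGy])
  also have "\<dots> = (\<Sum>p\<leftarrow>\<Delta> x. \<Sum>q\<leftarrow>\<Delta> y. S (fst p * fst q) * (\<Sum>p'\<leftarrow>\<Delta> (snd p). \<Sum>q'\<leftarrow>\<Delta> (snd q). (fst p' * fst q') * (S (snd q') * S (snd p'))))"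
    by (simp add: sum_list_multl sum_list_swap[where ys="\<Delta> y"] mult.assoc)
  also have "\<dots> = (\<Sum>p\<leftarrow>\<Delta> x. \<Sum>q\<leftarrow>\<Delta> y. S (fst p * fst q) * sc (\<epsilon> (snd p) * \<epsilon> (snd q)) 1)"
    by (simp only: claim2)
  also have "\<dots> = (\<Sum>p\<leftarrow>\<Delta> x. \<Sum>q\<leftarrow>\<Delta> y. S (sc (\<epsilon> (snd p)) (fst p) * sc (\<epsilon> (snd q)) (fst q)))"
    by (simp add: alg mult.commute)
  also have "\<dots> = S ((\<Sum>p\<leftarrow>\<Delta> x. sc (\<epsilon> (snd p)) (fst p)) * (\<Sum>q\<leftarrow>\<Delta> y. sc (\<epsilon> (snd q)) (fst q)))"
    by (simp add: sum_list_multl sum_list_multr S_sum) (rule sum_list_swap)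
  also have "\<dots> = S (x * y)" by (simp add: cu_r)
  finally show ?thesis ..
qed


definition Si :: "'h \<Rightarrow> 'h" where "Si = inv S"
lemma S_Si: "S (Si x) = x" using bijS by (simp add: Si_def surj_f_inv_f bij_is_surj)
lemma Si_S: "Si (S x) = x" using bijS by (simp add: Si_def inv_f_f bij_is_inj)
lemma S_inj: "S x = S y \<Longrightarrow> x = y" using bijS by (meson bij_def injD)
lemma linSi: "lin Si"
proof -
  have "Si (x + y) = Si x + Si y" for x y by (rule S_inj) (simp add: S_Si S_add)
  moreover have "Si (sc c x) = sc c (Si x)" for c x by (rule S_inj) (simp add: S_Si S_sc)
  ultimately show ?thesis using vs by (simp add: linear_iff)
qed
lemma lin_Si: "lin f \<Longrightarrow> lin (\<lambda>x. Si (f x))" using lin_comp[OF linSi] .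
lemma Si_anti: "Si (x * y) = Si y * Si x"
  by (rule S_inj) (simp add: S_anti S_Si)
lemma Si_one: "Si 1 = 1" by (rule S_inj) (simp add: S_Si S_one)
lemma ant_Si: "(\<Sum>p\<leftarrow>\<Delta> h. snd p * Si (fst p)) = sc (\<epsilon> h) 1"
  by (rule S_inj) (simp add: S_sum S_anti S_Si ant_r S_sc S_one)

lemmas lin_intros3 = lin_intros2 lin_Si

lemma sqt_unf: "semiquasitriangular sc \<Delta> \<epsilon> S R \<longleftrightarrow>
     hopf_algebra sc \<Delta> \<epsilon> S \<and>
     (\<exists>R'. teq2 sc (tmult2 R R') [(1, 1)] \<and> teq2 sc (tmult2 R' R) [(1, 1)]) \<and>
     teq3 sc [(a1, a2, b). (a, b) \<leftarrow> R, (a1, a2) \<leftarrow> \<Delta> a]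
             [(a, c, b * d). (a, b) \<leftarrow> R, (c, d) \<leftarrow> R] \<and>
     teq3 sc [(a, b1, b2). (a, b) \<leftarrow> R, (b1, b2) \<leftarrow> \<Delta> b]
             [(a * c, d, b). (a, b) \<leftarrow> R, (c, d) \<leftarrow> R] \<and>
     teq3 sc [(a, b2 * c, b1 * d). (a, b) \<leftarrow> R, (b1, b2) \<leftarrow> \<Delta> b, (c, d) \<leftarrow> R]
             [(a, c * b1, d * b2). (a, b) \<leftarrow> R, (b1, b2) \<leftarrow> \<Delta> b, (c, d) \<leftarrow> R] \<and>
     teq3 sc [(a2 * c, a1 * d, b). (a, b) \<leftarrow> R, (a1, a2) \<leftarrow> \<Delta> a, (c, d) \<leftarrow> R]
             [(c * a1, d * a2, b). (a, b) \<leftarrow> R, (a1, a2) \<leftarrow> \<Delta> a, (c, d) \<leftarrow> R] \<and>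
     (\<forall>h. in_H_ZH sc (nu \<Delta> S R h)) \<and>
     (\<forall>h. teq2 sc (nu \<Delta> S R h)
        [(a * h2 * c, S d * S h1 * b * h3). (a, b) \<leftarrow> R, (h1, h2, h3) \<leftarrow> Delta2 \<Delta> h, (c, d) \<leftarrow> R])"
  by (rule semiquasitriangular_def)

lemma Rinv: "\<exists>R'. teq2 sc (tmult2 R R') [(1, 1)] \<and> teq2 sc (tmult2 R' R) [(1, 1)]"
  and RC1: "teq3 sc [(a1, a2, b). (a, b) \<leftarrow> R, (a1, a2) \<leftarrow> \<Delta> a]
             [(a, c, b * d). (a, b) \<leftarrow> R, (c, d) \<leftarrow> R]"
  and RC2: "teq3 sc [(a, b1, b2). (a, b) \<leftarrow> R, (b1, b2) \<leftarrow> \<Delta> b]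
             [(a * c, d, b). (a, b) \<leftarrow> R, (c, d) \<leftarrow> R]"
  and RC5: "in_H_ZH sc (nu \<Delta> S R h)"
  and RC6: "teq2 sc (nu \<Delta> S R h)
        [(a * h2 * c, S d * S h1 * b * h3). (a, b) \<leftarrow> R, (h1, h2, h3) \<leftarrow> Delta2 \<Delta> h, (c, d) \<leftarrow> R]"
  using sqt unfolding sqt_unf by blast+

lemma C1s:
  assumes "trilinH G"
  shows "(\<Sum>p\<leftarrow>R. \<Sum>q\<leftarrow>\<Delta> (fst p). G (fst q) (snd q) (snd p)) = (\<Sum>p\<leftarrow>R. \<Sum>q\<leftarrow>R. G (fst p) (fst q) (snd p * snd q))"
  using L3[OF RC1 assms] by (simp add: map_concat sum_list_concat' comp_def split_def)

lemma C2s: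
  assumes "trilinH G"
  shows "(\<Sum>p\<leftarrow>R. \<Sum>q\<leftarrow>\<Delta> (snd p). G (fst p) (fst q) (snd q)) = (\<Sum>p\<leftarrow>R. \<Sum>q\<leftarrow>R. G (fst p * fst q) (snd q) (snd p))"
  using L3[OF RC2 assms] by (simp add: map_concat sum_list_concat' comp_def split_def)

lemma Tm:
  assumes "teq2 sc (tmult2 X Y) [(1,1)]" "bilinH g"
  shows "(\<Sum>p\<leftarrow>X. \<Sum>q\<leftarrow>Y. g (fst p * fst q) (snd p * snd q)) = g 1 1"
  using L2[OF assms] by (simp add: tmult2_def map_concat sum_list_concat' comp_def split_def)

lemma bil_lin1: "bilinH g \<Longrightarrow> lin f \<Longrightarrow> lin (\<lambda>x. g (f x) b)"
  unfolding bilinH_def using lin_comp[of "\<lambda>x. g x b" f] by auto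
lemma bil_lin2: "bilinH g \<Longrightarrow> lin f \<Longrightarrow> lin (\<lambda>x. g a (f x))"
  unfolding bilinH_def using lin_comp[of "g a" f] by auto

lemma epsR2: "(\<Sum>p\<leftarrow>R. sc (\<epsilon> (snd p)) (fst p)) = 1"
proof -
  define e where "e = (\<Sum>p\<leftarrow>R. sc (\<epsilon> (snd p)) (fst p))"
  have sa: "(\<Sum>p\<leftarrow>R. g (fst p) (snd p)) = (\<Sum>p\<leftarrow>R. g (fst p * e) (snd p))" if g: "bilinH g" for g
  proof -
    have t: "trilinH (\<lambda>a b c. g a (sc (\<epsilon> b) c))"
      unfolding trilinH_def by (intro allI conjI bil_lin1[OF g] bil_lin2[OF g] lin_intros)
    have "(\<Sum>p\<leftarrow>R. g (fst p) (snd p)) = (\<Sum>p\<leftarrow>R. g (fst p) (\<Sum>q\<leftarrow>\<Delta> (snd p). sc (\<epsilon> (fst q)) (snd q)))"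
      by (simp add: cu_l)
    also have "\<dots> = (\<Sum>p\<leftarrow>R. \<Sum>q\<leftarrow>\<Delta> (snd p). g (fst p) (sc (\<epsilon> (fst q)) (snd q)))"
      by (simp add: lin_sumD[OF bil_lin2[OF g lin_id]])
    also have "\<dots> = (\<Sum>p\<leftarrow>R. \<Sum>q\<leftarrow>R. g (fst p * fst q) (sc (\<epsilon> (snd q)) (snd p)))"
      by (rule C2s[OF t])
    also have "\<dots> = (\<Sum>p\<leftarrow>R. \<Sum>q\<leftarrow>R. g (fst p * sc (\<epsilon> (snd q)) (fst q)) (snd p))"
      by (simp add: lin_scD[OF bil_lin2[OF g lin_id]] lin_scD[OF bil_lin1[OF g lin_id]] smult_right)
    also have "\<dots> = (\<Sum>p\<leftarrow>R. g (fst p * e) (snd p))"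
      unfolding e_def sum_list_multl
      by (simp add: lin_sumD[OF bil_lin1[OF g lin_id]])
    finally show ?thesis .
  qed
  obtain R' where i1: "teq2 sc (tmult2 R' R) [(1, 1)]" using Rinv by blast
  have bl1: "bilinH (\<lambda>a b. sc (\<epsilon> b) (a * e))" by (simp add: bilinH_def; intro allI conjI lin_intros)
  have "e = (\<Sum>r\<leftarrow>R'. \<Sum>p\<leftarrow>R. sc (\<epsilon> (snd r * snd p)) (fst r * fst p * e))"
    using Tm[OF i1 bl1] by (simp add: eps_one sc_one)
  also have "\<dots> = (\<Sum>r\<leftarrow>R'. \<Sum>p\<leftarrow>R. sc (\<epsilon> (snd r * snd p)) (fst r * fst p))"
  proof -
    have "(\<Sum>p\<leftarrow>R. sc (\<epsilon> (snd r * snd p)) (fst r * fst p * e)) = (\<Sum>p\<leftarrow>R. sc (\<epsilon> (snd r * snd p)) (fst r * fst p))" for r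
    proof -
      have "bilinH (\<lambda>a b. sc (\<epsilon> (snd r * b)) (fst r * a))"
        by (simp add: bilinH_def; intro allI conjI lin_intros)
      then show ?thesis using sa[of "\<lambda>a b. sc (\<epsilon> (snd r * b)) (fst r * a)"] by (simp add: mult.assoc)
    qed
    then show ?thesis by simp
  qed
  also have "\<dots> = 1"
  proof -
    have bl2: "bilinH (\<lambda>a b. sc (\<epsilon> b) a)" by (simp add: bilinH_def; intro allI conjI lin_intros)
    show ?thesis using Tm[OF i1 bl2] by (simp add: eps_one sc_one)
  qed
  finally show ?thesis unfolding e_def .
qed


lemma epsR1: "(\<Sum>p\<leftarrow>R. sc (\<epsilon> (fst p)) (snd p)) = 1"
proof -
  define e where "e = (\<Sum>p\<leftarrow>R. sc (\<epsilon> (fst p)) (snd p))"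
  have sa: "(\<Sum>p\<leftarrow>R. g (fst p) (snd p)) = (\<Sum>p\<leftarrow>R. g (fst p) (e * snd p))" if g: "bilinH g" for g
  proof -
    have t: "trilinH (\<lambda>a b c. g (sc (\<epsilon> a) b) c)"
      unfolding trilinH_def by (intro allI conjI bil_lin1[OF g] bil_lin2[OF g] lin_intros)
    have "(\<Sum>p\<leftarrow>R. g (fst p) (snd p)) = (\<Sum>p\<leftarrow>R. g (\<Sum>q\<leftarrow>\<Delta> (fst p). sc (\<epsilon> (fst q)) (snd q)) (snd p))"
      by (simp add: cu_l)
    also have "\<dots> = (\<Sum>p\<leftarrow>R. \<Sum>q\<leftarrow>\<Delta> (fst p). g (sc (\<epsilon> (fst q)) (snd q)) (snd p))"
      by (simp add: lin_sumD[OF bil_lin1[OF g lin_id]])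
    also have "\<dots> = (\<Sum>p\<leftarrow>R. \<Sum>q\<leftarrow>R. g (sc (\<epsilon> (fst p)) (fst q)) (snd p * snd q))"
      by (rule C1s[OF t])
    also have "\<dots> = (\<Sum>q\<leftarrow>R. \<Sum>p\<leftarrow>R. g (fst q) (sc (\<epsilon> (fst p)) (snd p) * snd q))"
      by (simp add: lin_scD[OF bil_lin2[OF g lin_id]] lin_scD[OF bil_lin1[OF g lin_id]] smult_left)
        (rule sum_list_swap)
    also have "\<dots> = (\<Sum>q\<leftarrow>R. g (fst q) (e * snd q))"
      unfolding e_def sum_list_multr
      by (simp add: lin_sumD[OF bil_lin2[OF g lin_id]])
    finally show ?thesis .
  qed
  obtain R' where i2: "teq2 sc (tmult2 R R') [(1, 1)]" using Rinv by blast
  have bl1: "bilinH (\<lambda>a b. sc (\<epsilon> a) (e * b))" by (simp add: bilinH_def; intro allI conjI lin_intros)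
  have "e = (\<Sum>r\<leftarrow>R'. \<Sum>p\<leftarrow>R. sc (\<epsilon> (fst p * fst r)) (e * snd p * snd r))"
    using Tm[OF i2 bl1] sum_list_swap[of "\<lambda>p r. sc (\<epsilon> (fst p * fst r)) (e * (snd p * snd r))" R' R]
    by (simp add: eps_one sc_one mult.assoc)
  also have "\<dots> = (\<Sum>r\<leftarrow>R'. \<Sum>p\<leftarrow>R. sc (\<epsilon> (fst p * fst r)) (snd p * snd r))"
  proof -
    have "(\<Sum>p\<leftarrow>R. sc (\<epsilon> (fst p * fst r)) (e * snd p * snd r)) = (\<Sum>p\<leftarrow>R. sc (\<epsilon> (fst p * fst r)) (snd p * snd r))" for r
    proof -
      have "bilinH (\<lambda>a b. sc (\<epsilon> (a * fst r)) (b * snd r))"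
        by (simp add: bilinH_def; intro allI conjI lin_intros)
      then show ?thesis using sa[of "\<lambda>a b. sc (\<epsilon> (a * fst r)) (b * snd r)"] by (simp add: mult.assoc)
    qed
    then show ?thesis by simp
  qed
  also have "\<dots> = 1"
  proof -
    have bl2: "bilinH (\<lambda>a b. sc (\<epsilon> a) b)" by (simp add: bilinH_def; intro allI conjI lin_intros)
    show ?thesis using Tm[OF i2 bl2] by (simp add: eps_one sc_one) (subst sum_list_swap, simp)
  qed
  finally show ?thesis unfolding e_def .
qed

definition uD :: 'h where "uD = (\<Sum>p\<leftarrow>R. S (snd p) * fst p)"

lemma D2: "(\<Sum>p\<leftarrow>R. snd p * uD * fst p) = 1"
proof -
  have t: "trilinH (\<lambda>a b c. b * S c * a)"
    unfolding trilinH_def by (intro allI conjI lin_intros)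
  have "1 = (\<Sum>p\<leftarrow>R. \<Sum>q\<leftarrow>\<Delta> (snd p). fst q * S (snd q) * fst p)"
    by (simp add: sum_list_multr[symmetric] ant_r smult_left sc_one epsR2)
  also have "\<dots> = (\<Sum>p\<leftarrow>R. \<Sum>q\<leftarrow>R. snd q * S (snd p) * (fst p * fst q))"
    by (rule C2s[OF t])
  also have "\<dots> = (\<Sum>p\<leftarrow>R. snd p * uD * fst p)"
    unfolding uD_def by (simp add: sum_list_multl sum_list_multr mult.assoc) (rule sum_list_swap)
  finally show ?thesis ..
qed

lemma D3: "(\<Sum>p\<leftarrow>R. S (snd p) * uD * S (fst p)) = 1"
proof -
  have t: "trilinH (\<lambda>a b c. S c * a * S b)"
    unfolding trilinH_def by (intro allI conjI lin_intros)
  have "1 = (\<Sum>p\<leftarrow>R. \<Sum>q\<leftarrow>\<Delta> (fst p). S (snd p) * fst q * S (snd q))"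
    by (simp add: sum_list_multl[symmetric] mult.assoc ant_r smult_right sc_one S_sc[symmetric] S_sum[symmetric] epsR1 S_one)
  also have "\<dots> = (\<Sum>p\<leftarrow>R. \<Sum>q\<leftarrow>R. S (snd p * snd q) * fst p * S (fst q))"
    by (rule C1s[OF t])
  also have "\<dots> = (\<Sum>p\<leftarrow>R. S (snd p) * uD * S (fst p))"
    unfolding uD_def by (simp add: sum_list_multl sum_list_multr mult.assoc S_anti) (rule sum_list_swap)
  finally show ?thesis ..
qed


lemma sum_cong_list: "(\<And>x. x \<in> set xs \<Longrightarrow> f x = g x) \<Longrightarrow> (\<Sum>x\<leftarrow>xs. f x) = (\<Sum>x\<leftarrow>xs. g x)"
  by (metis map_cong)

lemma nus: "(\<Sum>p\<leftarrow>nu \<Delta> S R h. (g (fst p) (snd p) :: 'h)) =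
   (\<Sum>t\<leftarrow>\<Delta> h. \<Sum>s\<leftarrow>\<Delta> (fst t). \<Sum>a\<leftarrow>R. \<Sum>c\<leftarrow>R. g (snd a * snd s * snd c) (S (fst s) * S (fst a) * snd t * fst c))"
proof -
  have "(\<Sum>p\<leftarrow>nu \<Delta> S R h. g (fst p) (snd p)) =
   (\<Sum>a\<leftarrow>R. \<Sum>t\<leftarrow>\<Delta> h. \<Sum>s\<leftarrow>\<Delta> (fst t). \<Sum>c\<leftarrow>R. g (snd a * snd s * snd c) (S (fst s) * S (fst a) * snd t * fst c))"
    by (simp add: nu_def Delta2_def map_concat sum_list_concat' comp_def split_def)
  also have "\<dots> = (\<Sum>t\<leftarrow>\<Delta> h. \<Sum>a\<leftarrow>R. \<Sum>s\<leftarrow>\<Delta> (fst t). \<Sum>c\<leftarrow>R. g (snd a * snd s * snd c) (S (fst s) * S (fst a) * snd t * fst c))"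
    by (rule sum_list_swap)
  also have "\<dots> = (\<Sum>t\<leftarrow>\<Delta> h. \<Sum>s\<leftarrow>\<Delta> (fst t). \<Sum>a\<leftarrow>R. \<Sum>c\<leftarrow>R. g (snd a * snd s * snd c) (S (fst s) * S (fst a) * snd t * fst c))"
    by (rule sum_cong_list, rule sum_list_swap)
  finally show ?thesis .
qed

lemma C6s:
  assumes "bilinH g"
  shows "(\<Sum>p\<leftarrow>nu \<Delta> S R h. g (fst p) (snd p)) =
   (\<Sum>t\<leftarrow>\<Delta> h. \<Sum>s\<leftarrow>\<Delta> (fst t). \<Sum>a\<leftarrow>R. \<Sum>c\<leftarrow>R. g (fst a * snd s * fst c) (S (snd c) * S (fst s) * snd a * snd t))"
proof -
  have "(\<Sum>p\<leftarrow>nu \<Delta> S R h. g (fst p) (snd p)) =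
   (\<Sum>a\<leftarrow>R. \<Sum>t\<leftarrow>\<Delta> h. \<Sum>s\<leftarrow>\<Delta> (fst t). \<Sum>c\<leftarrow>R. g (fst a * snd s * fst c) (S (snd c) * S (fst s) * snd a * snd t))"
    using L2[OF RC6 assms] by (simp add: Delta2_def map_concat sum_list_concat' comp_def split_def)
  also have "\<dots> = (\<Sum>t\<leftarrow>\<Delta> h. \<Sum>a\<leftarrow>R. \<Sum>s\<leftarrow>\<Delta> (fst t). \<Sum>c\<leftarrow>R. g (fst a * snd s * fst c) (S (snd c) * S (fst s) * snd a * snd t))"
    by (rule sum_list_swap)
  also have "\<dots> = (\<Sum>t\<leftarrow>\<Delta> h. \<Sum>s\<leftarrow>\<Delta> (fst t). \<Sum>a\<leftarrow>R. \<Sum>c\<leftarrow>R. g (fst a * snd s * fst c) (S (snd c) * S (fst s) * snd a * snd t))"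
    by (rule sum_cong_list, rule sum_list_swap)
  finally show ?thesis .
qed

lemma Ecent:
  assumes "bilinH g1" "bilinH g2" "\<And>x z. z \<in> center \<Longrightarrow> g1 x z = g2 x z"
  shows "(\<Sum>p\<leftarrow>nu \<Delta> S R h. g1 (fst p) (snd p)) = (\<Sum>p\<leftarrow>nu \<Delta> S R h. g2 (fst p) (snd p))"
proof -
  obtain ys where t: "teq2 sc (nu \<Delta> S R h) ys" and c: "\<forall>(a, z)\<in>set ys. z \<in> center"
    using RC5[of h] unfolding in_H_ZH_def by blast
  have "(\<Sum>p\<leftarrow>ys. g1 (fst p) (snd p)) = (\<Sum>p\<leftarrow>ys. g2 (fst p) (snd p))"
    by (rule sum_cong_list) (use c assms(3) in auto)
  then show ?thesis using L2[OF t assms(1)] L2[OF t assms(2)] by simp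
qed

definition Tf :: "'h \<Rightarrow> 'h" where "Tf h = mu (nu \<Delta> S R h)"

lemma Tf_sum: "Tf h = (\<Sum>p\<leftarrow>nu \<Delta> S R h. fst p * snd p)"
  by (simp add: Tf_def mu_def case_prod_beta')

lemma linT: "lin Tf"
proof -
  have "lin (\<lambda>h. \<Sum>t\<leftarrow>\<Delta> h. \<Sum>s\<leftarrow>\<Delta> (fst t). \<Sum>a\<leftarrow>R. \<Sum>c\<leftarrow>R. (snd a * snd s * snd c) * (S (fst s) * S (fst a) * snd t * fst c))"
    by (intro lin_intros2 | simp only: prod.sel)+
  then show ?thesis unfolding Tf_sum nus[of "\<lambda>x z. x * z"] by simp
qed

lemmas lin_intros4 = lin_intros3 linT[THEN lin_comp]


lemma center_comm: "z \<in> center \<Longrightarrow> z * y = y * z" by (simp add: center_def)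

lemma eps_collect: "(\<Sum>t\<leftarrow>\<Delta> h. sc (\<epsilon> (snd t)) (sc (\<epsilon> (fst t)) x)) = sc (\<epsilon> h) x"
proof -
  have l: "lin (\<lambda>m. sc (\<epsilon> m) x)" by (intro lin_intros)
  have "(\<Sum>t\<leftarrow>\<Delta> h. sc (\<epsilon> (snd t)) (sc (\<epsilon> (fst t)) x)) = (\<Sum>t\<leftarrow>\<Delta> h. sc (\<epsilon> (sc (\<epsilon> (snd t)) (fst t))) x)"
    by (simp add: sc_sc eps_sc)
  also have "\<dots> = sc (\<epsilon> (\<Sum>t\<leftarrow>\<Delta> h. sc (\<epsilon> (snd t)) (fst t))) x"
    by (rule lin_sumD[OF l, symmetric])
  finally show ?thesis by (simp add: cu_r)
qed

lemma MI: "(\<Sum>t\<leftarrow>\<Delta> h. S (snd t) * uD * Tf (fst t)) = sc (\<epsilon> h) uD"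
proof -
  let ?Gp = "\<lambda>x m. \<Sum>s\<leftarrow>\<Delta> x. \<Sum>a\<leftarrow>R. \<Sum>c\<leftarrow>R. S (snd c) * S (fst s) * snd a * m * uD * (fst a * snd s * fst c)"
  have linGp: "lin (?Gp x)" for x by (intro lin_intros4 | simp only: prod.sel)+
  have tG: "trilinH (\<lambda>a b c. ?Gp a (b * S c))"
    unfolding trilinH_def by (intro allI conjI; (intro lin_intros4 | simp only: prod.sel)+)
  have e1: "S w * uD * Tf x = (\<Sum>t'\<leftarrow>\<Delta> x. ?Gp (fst t') (snd t' * S w))" for w x
  proof -
    have "S w * uD * Tf x = (\<Sum>p\<leftarrow>nu \<Delta> S R x. S w * uD * (fst p * snd p))"
      by (simp add: Tf_sum sum_list_multl)
    also have "\<dots> = (\<Sum>p\<leftarrow>nu \<Delta> S R x. snd p * S w * uD * fst p)"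
    proof (rule Ecent)
      show "bilinH (\<lambda>a b. S w * uD * (a * b))" unfolding bilinH_def by (intro allI conjI lin_intros)
      show "bilinH (\<lambda>a b. b * S w * uD * a)" unfolding bilinH_def by (intro allI conjI lin_intros)
      show "z \<in> center \<Longrightarrow> S w * uD * (y * z) = z * S w * uD * y" for y z
        using center_comm[of z "S w * uD * y"] by (simp add: mult.assoc)
    qed
    also have "\<dots> = (\<Sum>t'\<leftarrow>\<Delta> x. \<Sum>s\<leftarrow>\<Delta> (fst t'). \<Sum>a\<leftarrow>R. \<Sum>c\<leftarrow>R. (S (snd c) * S (fst s) * snd a * snd t') * S w * uD * (fst a * snd s * fst c))"
    proof (rule C6s)
      show "bilinH (\<lambda>a b. b * S w * uD * a)" unfolding bilinH_def by (intro allI conjI lin_intros)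
    qed
    also have "\<dots> = (\<Sum>t'\<leftarrow>\<Delta> x. ?Gp (fst t') (snd t' * S w))"
      by (simp add: mult.assoc)
    finally show ?thesis .
  qed
  have gp1: "?Gp x 1 = sc (\<epsilon> x) uD" for x
  proof -
    have "?Gp x 1 = (\<Sum>s\<leftarrow>\<Delta> x. \<Sum>a\<leftarrow>R. (\<lambda>m. \<Sum>c\<leftarrow>R. S (snd c) * S (fst s) * m * snd s * fst c) (snd a * uD * fst a))"
      by (simp add: mult.assoc)
    also have "\<dots> = (\<Sum>s\<leftarrow>\<Delta> x. (\<lambda>m. \<Sum>c\<leftarrow>R. S (snd c) * S (fst s) * m * snd s * fst c) (\<Sum>a\<leftarrow>R. snd a * uD * fst a))"
    proof (rule sum_cong_list)
      fix s
      have l: "lin (\<lambda>m. \<Sum>c\<leftarrow>R. S (snd c) * S (fst s) * m * snd s * fst c)" by (intro lin_intros)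
      show "(\<Sum>a\<leftarrow>R. (\<lambda>m. \<Sum>c\<leftarrow>R. S (snd c) * S (fst s) * m * snd s * fst c) (snd a * uD * fst a)) =
        (\<lambda>m. \<Sum>c\<leftarrow>R. S (snd c) * S (fst s) * m * snd s * fst c) (\<Sum>a\<leftarrow>R. snd a * uD * fst a)"
        by (rule lin_sumD[OF l, symmetric])
    qed
    also have "\<dots> = (\<Sum>s\<leftarrow>\<Delta> x. (\<lambda>m. \<Sum>c\<leftarrow>R. S (snd c) * m * fst c) (S (fst s) * snd s))"
      by (simp only: D2) (simp add: mult.assoc)
    also have "\<dots> = (\<lambda>m. \<Sum>c\<leftarrow>R. S (snd c) * m * fst c) (\<Sum>s\<leftarrow>\<Delta> x. S (fst s) * snd s)"
    proof -
      have l: "lin (\<lambda>m. \<Sum>c\<leftarrow>R. S (snd c) * m * fst c)" by (intro lin_intros)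
      show ?thesis by (rule lin_sumD[OF l, symmetric])
    qed
    also have "\<dots> = sc (\<epsilon> x) uD"
      by (simp add: ant_l uD_def smult_left smult_right sc_sum)
    finally show ?thesis .
  qed
  have "(\<Sum>t\<leftarrow>\<Delta> h. S (snd t) * uD * Tf (fst t)) = (\<Sum>t\<leftarrow>\<Delta> h. \<Sum>t'\<leftarrow>\<Delta> (fst t). ?Gp (fst t') (snd t' * S (snd t)))"
    by (simp add: e1)
  also have "\<dots> = (\<Sum>t\<leftarrow>\<Delta> h. \<Sum>t'\<leftarrow>\<Delta> (snd t). ?Gp (fst t) (fst t' * S (snd t')))"
    by (rule coass[OF tG])
  also have "\<dots> = (\<Sum>t\<leftarrow>\<Delta> h. ?Gp (fst t) (\<Sum>t'\<leftarrow>\<Delta> (snd t). fst t' * S (snd t')))"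
    by (rule sum_cong_list, rule lin_sumD[OF linGp, symmetric])
  also have "\<dots> = (\<Sum>t\<leftarrow>\<Delta> h. sc (\<epsilon> (snd t)) (?Gp (fst t) 1))"
    by (rule sum_cong_list, simp only: ant_r lin_scD[OF linGp])
  also have "\<dots> = sc (\<epsilon> h) uD" by (simp only: gp1 eps_collect)
  finally show ?thesis .
qed


lemma uT: "uD * Tf h = S (S h) * uD"
proof -
  have tG: "trilinH (\<lambda>a b c. S (S c) * S b * uD * Tf a)"
    unfolding trilinH_def by (intro allI conjI; (intro lin_intros4 | simp only: prod.sel)+)
  have "S (S h) * uD = (\<lambda>m. S (S m) * uD) (\<Sum>t\<leftarrow>\<Delta> h. sc (\<epsilon> (fst t)) (snd t))"
    by (simp add: cu_l)
  also have "\<dots> = (\<Sum>t\<leftarrow>\<Delta> h. S (S (sc (\<epsilon> (fst t)) (snd t))) * uD)"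
    by (rule lin_sumD) (intro lin_intros)
  also have "\<dots> = (\<Sum>t\<leftarrow>\<Delta> h. S (S (snd t)) * (\<Sum>t'\<leftarrow>\<Delta> (fst t). S (snd t') * uD * Tf (fst t')))"
    by (simp add: MI S_sc smult_left smult_right)
  also have "\<dots> = (\<Sum>t\<leftarrow>\<Delta> h. \<Sum>t'\<leftarrow>\<Delta> (fst t). S (S (snd t)) * S (snd t') * uD * Tf (fst t'))"
    by (simp add: sum_list_multl mult.assoc)
  also have "\<dots> = (\<Sum>t\<leftarrow>\<Delta> h. \<Sum>t'\<leftarrow>\<Delta> (snd t). S (S (snd t')) * S (fst t') * uD * Tf (fst t))"
    by (rule coass[OF tG])
  also have "\<dots> = (\<Sum>t\<leftarrow>\<Delta> h. S (\<Sum>t'\<leftarrow>\<Delta> (snd t). fst t' * S (snd t')) * uD * Tf (fst t))"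
    by (simp add: S_sum S_anti sum_list_multr)
  also have "\<dots> = (\<Sum>t\<leftarrow>\<Delta> h. (\<lambda>m. uD * Tf m) (sc (\<epsilon> (snd t)) (fst t)))"
    by (simp add: ant_r S_sc S_one smult_left smult_right lin_scD[OF linT] mult.assoc)
  also have "\<dots> = (\<lambda>m. uD * Tf m) (\<Sum>t\<leftarrow>\<Delta> h. sc (\<epsilon> (snd t)) (fst t))"
    by (rule lin_sumD[symmetric]) (intro lin_intros4)
  also have "\<dots> = uD * Tf h" by (simp add: cu_r)
  finally show ?thesis ..
qed

definition Vf :: "'h \<Rightarrow> 'h" where "Vf h = (\<Sum>p\<leftarrow>nu \<Delta> S R h. S (fst p) * snd p)"

lemma linV: "lin Vf"
proof -
  have "lin (\<lambda>h. \<Sum>t\<leftarrow>\<Delta> h. \<Sum>s\<leftarrow>\<Delta> (fst t). \<Sum>a\<leftarrow>R. \<Sum>c\<leftarrow>R. S (snd a * snd s * snd c) * (S (fst s) * S (fst a) * snd t * fst c))"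
    by (simp only: S_anti; (intro lin_intros2 | simp only: prod.sel)+)
  then show ?thesis unfolding Vf_def nus[of "\<lambda>x z. S x * z"] by simp
qed


lemma VI: "(\<Sum>t\<leftarrow>\<Delta> h. Vf (snd t) * uD * fst t) = sc (\<epsilon> h) uD"
proof -
  let ?F = "\<lambda>m g2 g3. \<Sum>a\<leftarrow>R. \<Sum>c\<leftarrow>R. S (snd a * g2 * snd c) * uD * m * (S (fst a) * g3 * fst c)"
  let ?K = "\<lambda>y x g3. \<Sum>s\<leftarrow>\<Delta> x. ?F (y * S (fst s)) (snd s) g3"
  have tK: "trilinH ?K"
    unfolding trilinH_def by (simp only: S_anti; intro allI conjI; (intro lin_intros4 | simp only: prod.sel)+)
  have tG: "trilinH (\<lambda>a b c. ?F (a * S b) c w)" for w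
    unfolding trilinH_def by (simp only: S_anti; intro allI conjI; (intro lin_intros4 | simp only: prod.sel)+)
  have lF1: "lin (\<lambda>m. ?F m g w)" for g w by (simp only: S_anti; (intro lin_intros4 | simp only: prod.sel)+)
  have lF2: "lin (\<lambda>g. ?F m g w)" for m w by (simp only: S_anti; (intro lin_intros4 | simp only: prod.sel)+)
  have s12: "Vf w * uD * y = (\<Sum>t'\<leftarrow>\<Delta> w. ?K y (fst t') (snd t'))" for w y
  proof -
    have "Vf w * uD * y = (\<Sum>p\<leftarrow>nu \<Delta> S R w. S (fst p) * snd p * uD * y)"
      by (simp add: Vf_def sum_list_multr)
    also have "\<dots> = (\<Sum>p\<leftarrow>nu \<Delta> S R w. S (fst p) * uD * y * snd p)"
    proof (rule Ecent)
      show "bilinH (\<lambda>a b. S a * b * uD * y)" unfolding bilinH_def by (intro allI conjI lin_intros)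
      show "bilinH (\<lambda>a b. S a * uD * y * b)" unfolding bilinH_def by (intro allI conjI lin_intros)
      show "z \<in> center \<Longrightarrow> S x * z * uD * y = S x * uD * y * z" for x z
        using center_comm[of z "uD * y"] by (simp add: mult.assoc)
    qed
    also have "\<dots> = (\<Sum>t\<leftarrow>\<Delta> w. \<Sum>s\<leftarrow>\<Delta> (fst t). \<Sum>a\<leftarrow>R. \<Sum>c\<leftarrow>R. S (snd a * snd s * snd c) * uD * y * (S (fst s) * S (fst a) * snd t * fst c))"
      by (rule nus)
    also have "\<dots> = (\<Sum>t'\<leftarrow>\<Delta> w. ?K y (fst t') (snd t'))"
      by (simp add: mult.assoc)
    finally show ?thesis .
  qed
  have s5: "(\<Sum>q\<leftarrow>\<Delta> m. \<Sum>s\<leftarrow>\<Delta> (fst q). ?F (fst s * S (snd s)) (snd q) w) = ?F 1 m w" for m w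
  proof -
    have "(\<Sum>q\<leftarrow>\<Delta> m. \<Sum>s\<leftarrow>\<Delta> (fst q). ?F (fst s * S (snd s)) (snd q) w)
        = (\<Sum>q\<leftarrow>\<Delta> m. ?F (\<Sum>s\<leftarrow>\<Delta> (fst q). fst s * S (snd s)) (snd q) w)"
      by (rule sum_cong_list, rule lin_sumD[OF lF1, symmetric])
    also have "\<dots> = (\<Sum>q\<leftarrow>\<Delta> m. ?F 1 (sc (\<epsilon> (fst q)) (snd q)) w)"
      by (rule sum_cong_list, simp only: ant_r lin_scD[OF lF1] lin_scD[OF lF2])
    also have "\<dots> = ?F 1 (\<Sum>q\<leftarrow>\<Delta> m. sc (\<epsilon> (fst q)) (snd q)) w"
      by (rule lin_sumD[OF lF2, symmetric])
    finally show ?thesis by (simp only: cu_l)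
  qed
  have s6: "?F 1 g2 g3 = (\<Sum>c\<leftarrow>R. S (snd c) * S g2 * g3 * fst c)" for g2 g3
  proof -
    have l: "lin (\<lambda>m. \<Sum>c\<leftarrow>R. S (snd c) * S g2 * m * g3 * fst c)" by (intro lin_intros)
    have "?F 1 g2 g3 = (\<Sum>a\<leftarrow>R. (\<lambda>m. \<Sum>c\<leftarrow>R. S (snd c) * S g2 * m * g3 * fst c) (S (snd a) * uD * S (fst a)))"
      by (simp add: S_anti mult.assoc)
    also have "\<dots> = (\<lambda>m. \<Sum>c\<leftarrow>R. S (snd c) * S g2 * m * g3 * fst c) (\<Sum>a\<leftarrow>R. S (snd a) * uD * S (fst a))"
      by (rule lin_sumD[OF l, symmetric])
    finally show ?thesis by (simp only: D3) (simp add: mult.assoc)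
  qed
  have "(\<Sum>t\<leftarrow>\<Delta> h. Vf (snd t) * uD * fst t) = (\<Sum>t\<leftarrow>\<Delta> h. \<Sum>t'\<leftarrow>\<Delta> (snd t). ?K (fst t) (fst t') (snd t'))"
    by (simp only: s12)
  also have "\<dots> = (\<Sum>t\<leftarrow>\<Delta> h. \<Sum>t'\<leftarrow>\<Delta> (fst t). ?K (fst t') (snd t') (snd t))"
    by (rule coass[OF tK, symmetric])
  also have "\<dots> = (\<Sum>t\<leftarrow>\<Delta> h. \<Sum>q\<leftarrow>\<Delta> (fst t). \<Sum>s\<leftarrow>\<Delta> (fst q). ?F (fst s * S (snd s)) (snd q) (snd t))"
    by (rule sum_cong_list, rule coass[OF tG, symmetric])
  also have "\<dots> = (\<Sum>t\<leftarrow>\<Delta> h. ?F 1 (fst t) (snd t))"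
    by (simp only: s5)
  also have "\<dots> = (\<Sum>t\<leftarrow>\<Delta> h. (\<lambda>m. \<Sum>c\<leftarrow>R. S (snd c) * m * fst c) (S (fst t) * snd t))"
    by (simp only: s6) (simp add: mult.assoc)
  also have "\<dots> = (\<lambda>m. \<Sum>c\<leftarrow>R. S (snd c) * m * fst c) (\<Sum>t\<leftarrow>\<Delta> h. S (fst t) * snd t)"
    by (rule lin_sumD[symmetric]) (intro lin_intros)
  also have "\<dots> = sc (\<epsilon> h) uD"
    by (simp add: ant_l uD_def smult_left smult_right sc_sum)
  finally show ?thesis .
qed


lemma Vu: "Vf h * uD = uD * Si h"
proof -
  have tG: "trilinH (\<lambda>a b c. Vf c * uD * b * Si a)"
    unfolding trilinH_def by (intro allI conjI; (intro lin_intros4 linV[THEN lin_comp] | simp only: prod.sel)+)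
  have "uD * Si h = (\<lambda>m. uD * Si m) (\<Sum>t\<leftarrow>\<Delta> h. sc (\<epsilon> (snd t)) (fst t))"
    by (simp add: cu_r)
  also have "\<dots> = (\<Sum>t\<leftarrow>\<Delta> h. uD * Si (sc (\<epsilon> (snd t)) (fst t)))"
    by (rule lin_sumD) (intro lin_intros3)
  also have "\<dots> = (\<Sum>t\<leftarrow>\<Delta> h. (\<Sum>t'\<leftarrow>\<Delta> (snd t). Vf (snd t') * uD * fst t') * Si (fst t))"
    by (simp add: VI lin_scD[OF linSi] smult_left smult_right)
  also have "\<dots> = (\<Sum>t\<leftarrow>\<Delta> h. \<Sum>t'\<leftarrow>\<Delta> (snd t). Vf (snd t') * uD * fst t' * Si (fst t))"
    by (simp add: sum_list_multr)
  also have "\<dots> = (\<Sum>t\<leftarrow>\<Delta> h. \<Sum>t'\<leftarrow>\<Delta> (fst t). Vf (snd t) * uD * snd t' * Si (fst t'))"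
    by (rule coass[OF tG, symmetric])
  also have "\<dots> = (\<Sum>t\<leftarrow>\<Delta> h. Vf (snd t) * uD * (\<Sum>t'\<leftarrow>\<Delta> (fst t). snd t' * Si (fst t')))"
    by (simp add: sum_list_multl mult.assoc)
  also have "\<dots> = (\<Sum>t\<leftarrow>\<Delta> h. (\<lambda>m. Vf m * uD) (sc (\<epsilon> (fst t)) (snd t)))"
    by (simp add: ant_Si lin_scD[OF linV] smult_left smult_right mult.assoc)
  also have "\<dots> = (\<lambda>m. Vf m * uD) (\<Sum>t\<leftarrow>\<Delta> h. sc (\<epsilon> (fst t)) (snd t))"
    by (rule lin_sumD[symmetric]) (intro lin_intros linV)
  also have "\<dots> = Vf h * uD" by (simp add: cu_l)
  finally show ?thesis ..
qed

definition ui :: 'h where "ui = (\<Sum>p\<leftarrow>R. Tf (Si (Si (snd p))) * fst p)"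

lemma u_ui: "uD * ui = 1"
  unfolding ui_def by (simp add: sum_list_multl mult.assoc[symmetric] uT S_Si D2)

lemma ui_u: "ui * uD = 1"
proof -
  have w: "Vf (S ui) * uD = 1" by (simp add: Vu Si_S u_ui)
  have "ui = Vf (S ui) * uD * ui" by (simp add: w)
  also have "\<dots> = Vf (S ui)" by (simp add: mult.assoc u_ui)
  finally have "ui = Vf (S ui)" .
  then show ?thesis using w by simp
qed

lemma T_formula: "Tf h = ui * S (S h) * uD"
proof -
  have "Tf h = ui * (uD * Tf h)" by (simp add: mult.assoc[symmetric] ui_u)
  also have "\<dots> = ui * S (S h) * uD" by (simp add: uT mult.assoc)
  finally show ?thesis .
qed

lemma T_alt: "mu (SS S (nu \<Delta> S R (Si h))) = S (Tf (Si h))"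
proof -
  have "mu (SS S (nu \<Delta> S R (Si h))) = (\<Sum>p\<leftarrow>nu \<Delta> S R (Si h). S (snd p * fst p))"
    by (simp add: mu_def SS_def comp_def case_prod_beta' S_anti)
  also have "\<dots> = S (\<Sum>p\<leftarrow>nu \<Delta> S R (Si h). snd p * fst p)" by (simp add: S_sum)
  also have "(\<Sum>p\<leftarrow>nu \<Delta> S R (Si h). snd p * fst p) = (\<Sum>p\<leftarrow>nu \<Delta> S R (Si h). fst p * snd p)"
  proof (rule Ecent)
    show "bilinH (\<lambda>a b. b * a)" unfolding bilinH_def by (intro allI conjI lin_intros)
    show "bilinH (\<lambda>a b. a * b)" unfolding bilinH_def by (intro allI conjI lin_intros)
    show "z \<in> center \<Longrightarrow> z * x = x * z" for x z by (rule center_comm)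
  qed
  finally show ?thesis by (simp add: Tf_sum)
qed

end

theorem proposition3p6:
  fixes sc :: "'k::field \<Rightarrow> 'h::ring_1 \<Rightarrow> 'h"
    and \<Delta> :: "'h \<Rightarrow> ('h \<times> 'h) list"
    and \<epsilon> :: "'h \<Rightarrow> 'k"
    and S :: "'h \<Rightarrow> 'h"
    and R :: "('h \<times> 'h) list"
  assumes "semiquasitriangular sc \<Delta> \<epsilon> S R"
  defines "T \<equiv> \<lambda>h. mu (nu \<Delta> S R h)"
    and "u \<equiv> drinfeld_u S R"
  shows "(S u * u \<in> center \<longleftrightarrow> S \<circ> T = T \<circ> S)
       \<and> (S \<circ> T = T \<circ> S \<longleftrightarrow> T = (\<lambda>h. mu (SS S (nu \<Delta> S R (inv S h)))))"
proof -
  interpret A: sqt sc \<Delta> \<epsilon> S R by (unfold_locales) (rule assms(1))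
  have Teq: "T = A.Tf" unfolding T_def by (simp add: A.Tf_def fun_eq_iff)
  have ueq: "u = A.uD" unfolding u_def by (simp add: drinfeld_u_def A.uD_def case_prod_beta')
  have Sieq: "inv S = A.Si" by (simp add: A.Si_def)
  let ?v = "A.ui"
  have uv: "u * ?v = 1" and vu: "?v * u = 1" using A.u_ui A.ui_u ueq by simp_all
  have Tf: "T h = ?v * S (S h) * u" for h using A.T_formula ueq Teq by simp
  have Suv: "S ?v * S u = 1" and Svu: "S u * S ?v = 1"
    using arg_cong[OF uv, of S] arg_cong[OF vu, of S] by (simp_all add: A.S_anti A.S_one)
  have comm_iff: "(S \<circ> T = T \<circ> S) \<longleftrightarrow> (\<forall>g. S (T g) = T (S g))" by (auto simp: fun_eq_iff)
  have key: "S (T g) = T (S g) \<longleftrightarrow> u * S u * S (S (S g)) = S (S (S g)) * (u * S u)" for g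
  proof -
    let ?Y = "S (S (S g))"
    have e1: "S (T g) = S u * ?Y * S ?v" by (simp add: Tf A.S_anti mult.assoc)
    have e2: "T (S g) = ?v * ?Y * u" by (simp add: Tf)
    have "S u * ?Y * S ?v = ?v * ?Y * u \<longleftrightarrow> u * (S u * ?Y * S ?v) * S u = u * (?v * ?Y * u) * S u"
    proof
      assume "u * (S u * ?Y * S ?v) * S u = u * (?v * ?Y * u) * S u"
      then have "?v * (u * (S u * ?Y * S ?v) * S u) * S ?v = ?v * (u * (?v * ?Y * u) * S u) * S ?v" by simp
      then show "S u * ?Y * S ?v = ?v * ?Y * u"
        by (simp add: mult.assoc[symmetric] vu) (simp add: mult.assoc Svu)
    qed simp
    also have "u * (S u * ?Y * S ?v) * S u = u * S u * ?Y" by (simp add: mult.assoc Suv)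
    also have "u * (?v * ?Y * u) * S u = ?Y * (u * S u)" by (simp add: mult.assoc[symmetric] uv)
    finally show ?thesis using e1 e2 by simp
  qed
  have c_eq: "u * S u \<in> center \<longleftrightarrow> S u * u \<in> center"
  proof
    assume c: "u * S u \<in> center"
    have "S u * u = ?v * (u * S u) * u" by (simp add: mult.assoc[symmetric] vu)
    also have "\<dots> = (u * S u) * ?v * u" using A.center_comm[OF c, of ?v] by simp
    also have "\<dots> = u * S u" by (simp add: mult.assoc vu)
    finally show "S u * u \<in> center" using c by simp
  next
    assume c: "S u * u \<in> center"
    have "u * S u = u * (S u * u) * ?v" by (simp add: mult.assoc uv)
    also have "\<dots> = (S u * u) * u * ?v" using A.center_comm[OF c, of u] by simp
    also have "\<dots> = S u * u" by (simp add: mult.assoc uv)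
    finally show "u * S u \<in> center" using c by simp
  qed
  have S3surj: "\<exists>g. S (S (S g)) = x" for x
    by (rule exI[of _ "A.Si (A.Si (A.Si x))"]) (simp add: A.S_Si)
  have part1: "S u * u \<in> center \<longleftrightarrow> S \<circ> T = T \<circ> S"
  proof -
    have "(\<forall>g. S (T g) = T (S g)) \<longleftrightarrow> u * S u \<in> center"
    proof
      assume h: "\<forall>g. S (T g) = T (S g)"
      show "u * S u \<in> center" unfolding center_def
      proof (intro CollectI allI)
        fix x obtain g where "S (S (S g)) = x" using S3surj by blast
        then show "u * S u * x = x * (u * S u)" using h key[of g] by simp
      qed
    next
      assume c: "u * S u \<in> center"
      show "\<forall>g. S (T g) = T (S g)"
      proof
        fix g show "S (T g) = T (S g)" using key[of g] A.center_comm[OF c, of "S (S (S g))"] by simp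
      qed
    qed
    then show ?thesis using comm_iff c_eq by simp
  qed
  have part2: "S \<circ> T = T \<circ> S \<longleftrightarrow> T = (\<lambda>h. mu (SS S (nu \<Delta> S R (inv S h))))"
  proof -
    have r: "(\<lambda>h. mu (SS S (nu \<Delta> S R (inv S h)))) = (\<lambda>h. S (T (A.Si h)))"
      by (simp add: Sieq A.T_alt Teq)
    have "T = (\<lambda>h. S (T (A.Si h))) \<longleftrightarrow> (\<forall>g. S (T g) = T (S g))"
    proof
      assume h: "T = (\<lambda>h. S (T (A.Si h)))"
      show "\<forall>g. S (T g) = T (S g)"
      proof
        fix g show "S (T g) = T (S g)" using fun_cong[OF h, of "S g"] by (simp add: A.Si_S)
      qed
    next
      assume h: "\<forall>g. S (T g) = T (S g)"
      show "T = (\<lambda>h. S (T (A.Si h)))"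
      proof
        fix x show "T x = S (T (A.Si x))" using h[rule_format, of "A.Si x"] by (simp add: A.S_Si)
      qed
    qed
    then show ?thesis using r comm_iff by simp
  qed
  show ?thesis using part1 part2 by blast
qed

end
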